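(* Let $G$ be a finite group of odd order $n$ and let $Z_2 = \{0,1\}$ be the near-ring with addition modulo $2$ and multiplication $a\cdot b = a$ for all $a,b \in Z_2$. Then the group near-ring $Z_2G$ has a subnear-ring $S \neq \{0\}$ which is a Boolean near-ring (i.e. $x\cdot x = x$ for all $x \in S$).
   Context: The group near-ring $Z_2G$ consists of all formal sums $\sum_{g \in G} \alpha(g) g$ with $\alpha(g) \in Z_2$; addition is coefficientwise, and the product of $\alpha = \sum_{g \in \operatorname{supp}\alpha} \alpha(g) g$ and $\beta = \sum_{h \in \operatorname{supp}\beta} \beta(h) h$ (where $\operatorname{supp}$ denotes the set of group elements with nonzero coefficient) is $\sum_{g \in \operatorname{supp}\alpha,\, h\in\operatorname{supp}\beta} (\alpha(g)\cdot\beta(h))\, gh$, like terms being collected by addition in $Z_2$. A subnear-ring is a subset that is a subgroup under addition and closed under multiplication. *)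

theory Defs
  imports "HOL-Algebra.Group"
begin

text \<open>The near-ring Z2 = {0,1}, represented by bool (False = 0, True = 1):
  addition modulo 2 and multiplication a * b = a.\<close>

definition z2_add :: "bool \<Rightarrow> bool \<Rightarrow> bool" where
  "z2_add a b = (a \<noteq> b)"

definition z2_neg :: "bool \<Rightarrow> bool" where
  "z2_neg a = a"

definition z2_mult :: "bool \<Rightarrow> bool \<Rightarrow> bool" where
  "z2_mult a b = a"

definition z2_sum :: "('i \<Rightarrow> bool) \<Rightarrow> 'i set \<Rightarrow> bool" where
  "z2_sum f I = odd (card {i \<in> I. f i})"

text \<open>Elements of the group near-ring Z2G: coefficient functions on carrier G,
  zero outside the carrier.\<close>
definition gnr_elems :: "('a, 'b) monoid_scheme \<Rightarrow> ('a \<Rightarrow> bool) set" where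
  "gnr_elems G = {\<alpha>. \<forall>x. x \<notin> carrier G \<longrightarrow> \<not> \<alpha> x}"

definition gnr_supp :: "('a, 'b) monoid_scheme \<Rightarrow> ('a \<Rightarrow> bool) \<Rightarrow> 'a set" where
  "gnr_supp G \<alpha> = {g \<in> carrier G. \<alpha> g}"

definition gnr_zero :: "'a \<Rightarrow> bool" where
  "gnr_zero = (\<lambda>x. False)"

definition gnr_add :: "('a, 'b) monoid_scheme \<Rightarrow> ('a \<Rightarrow> bool) \<Rightarrow> ('a \<Rightarrow> bool) \<Rightarrow> ('a \<Rightarrow> bool)" where
  "gnr_add G \<alpha> \<beta> = (\<lambda>x. if x \<in> carrier G then z2_add (\<alpha> x) (\<beta> x) else False)"

definition gnr_neg :: "('a, 'b) monoid_scheme \<Rightarrow> ('a \<Rightarrow> bool) \<Rightarrow> ('a \<Rightarrow> bool)" where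
  "gnr_neg G \<alpha> = (\<lambda>x. if x \<in> carrier G then z2_neg (\<alpha> x) else False)"

text \<open>Product: sum over g in supp alpha, h in supp beta of (alpha(g) * beta(h)) gh.\<close>
definition gnr_mult :: "('a, 'b) monoid_scheme \<Rightarrow> ('a \<Rightarrow> bool) \<Rightarrow> ('a \<Rightarrow> bool) \<Rightarrow> ('a \<Rightarrow> bool)" where
  "gnr_mult G \<alpha> \<beta> = (\<lambda>x. if x \<in> carrier G then
      z2_sum (\<lambda>(g, h). z2_mult (\<alpha> g) (\<beta> h))
             {(g, h). g \<in> gnr_supp G \<alpha> \<and> h \<in> gnr_supp G \<beta> \<and> g \<otimes>\<^bsub>G\<^esub> h = x}
    else False)"

definition gnr_subnear_ring :: "('a, 'b) monoid_scheme \<Rightarrow> ('a \<Rightarrow> bool) set \<Rightarrow> bool" where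
  "gnr_subnear_ring G S \<longleftrightarrow>
     S \<subseteq> gnr_elems G \<and> gnr_zero \<in> S \<and>
     (\<forall>\<alpha>\<in>S. \<forall>\<beta>\<in>S. gnr_add G \<alpha> \<beta> \<in> S) \<and>
     (\<forall>\<alpha>\<in>S. gnr_neg G \<alpha> \<in> S) \<and>
     (\<forall>\<alpha>\<in>S. \<forall>\<beta>\<in>S. gnr_mult G \<alpha> \<beta> \<in> S)"

definition gnr_boolean :: "('a, 'b) monoid_scheme \<Rightarrow> ('a \<Rightarrow> bool) set \<Rightarrow> bool" where
  "gnr_boolean G S \<longleftrightarrow> (\<forall>x\<in>S. gnr_mult G x x = x)"

end

theory Submission
  imports Defs
begin

lemma card_pairs:
  fixes G (structure)
  assumes "group G" "x \<in> carrier G"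
  shows "card {(g, h). g \<in> carrier G \<and> h \<in> carrier G \<and> g \<otimes>\<^bsub>G\<^esub> h = x} = card (carrier G)"
proof -
  interpret group G by fact
  have "bij_betw (\<lambda>h. (x \<otimes> inv h, h)) (carrier G)
     {(g, h). g \<in> carrier G \<and> h \<in> carrier G \<and> g \<otimes> h = x}"
  proof (rule bij_betw_imageI)
    show "inj_on (\<lambda>h. (x \<otimes> inv h, h)) (carrier G)" by (auto simp: inj_on_def)
    show "(\<lambda>h. (x \<otimes> inv h, h)) ` carrier G = {(g, h). g \<in> carrier G \<and> h \<in> carrier G \<and> g \<otimes> h = x}"
    proof (intro equalityI subsetI)
      fix p assume "p \<in> (\<lambda>h. (x \<otimes> inv h, h)) ` carrier G"
      then show "p \<in> {(g, h). g \<in> carrier G \<and> h \<in> carrier G \<and> g \<otimes> h = x}"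
        using assms(2) by (auto simp: m_assoc)
    next
      fix p assume "p \<in> {(g, h). g \<in> carrier G \<and> h \<in> carrier G \<and> g \<otimes> h = x}"
      then obtain g h where p: "p = (g, h)" "g \<in> carrier G" "h \<in> carrier G" "g \<otimes> h = x" by auto
      then have "g = x \<otimes> inv h" using inv_solve_right[of g x h] assms(2) by simp
      then show "p \<in> (\<lambda>h. (x \<otimes> inv h, h)) ` carrier G" using p by auto
    qed
  qed
  then show ?thesis by (simp add: bij_betw_same_card)
qed

theorem theorem3p5p6:
  fixes G :: "('a, 'b) monoid_scheme"
  assumes "group G" and "finite (carrier G)" and "odd (card (carrier G))"
  shows "\<exists>S. gnr_subnear_ring G S \<and> S \<noteq> {gnr_zero} \<and> gnr_boolean G S"
proof -
  define e where "e = (\<lambda>x. x \<in> carrier G)"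
  have ne: "e \<noteq> gnr_zero"
    using group.is_monoid[OF assms(1)] monoid.one_closed
    unfolding e_def gnr_zero_def by (metis)
  have z0: "gnr_mult G gnr_zero b = gnr_zero" "gnr_mult G a gnr_zero = gnr_zero" for a b
    by (auto simp: gnr_mult_def gnr_zero_def gnr_supp_def z2_sum_def)
  have ee: "gnr_mult G e e = e"
  proof
    fix x
    show "gnr_mult G e e x = e x"
    proof (cases "x \<in> carrier G")
      case True
      have "{i \<in> {(g, h). g \<in> gnr_supp G e \<and> h \<in> gnr_supp G e \<and> g \<otimes>\<^bsub>G\<^esub> h = x}.
               (\<lambda>(g, h). z2_mult (e g) (e h)) i}
            = {(g, h). g \<in> carrier G \<and> h \<in> carrier G \<and> g \<otimes>\<^bsub>G\<^esub> h = x}"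
        by (auto simp: gnr_supp_def e_def z2_mult_def)
      then show ?thesis using True card_pairs[OF assms(1) True] assms(3)
        by (simp add: gnr_mult_def z2_sum_def e_def)
    qed (simp add: gnr_mult_def e_def)
  qed
  have a1: "gnr_add G gnr_zero gnr_zero = gnr_zero" "gnr_add G gnr_zero e = e"
    "gnr_add G e gnr_zero = e" "gnr_add G e e = gnr_zero"
    by (auto simp: gnr_add_def gnr_zero_def e_def z2_add_def)
  have n1: "gnr_neg G gnr_zero = gnr_zero" "gnr_neg G e = e"
    by (auto simp: gnr_neg_def gnr_zero_def e_def z2_neg_def)
  let ?S = "{gnr_zero, e}"
  have "gnr_subnear_ring G ?S"
    unfolding gnr_subnear_ring_def
    using a1 n1 ee z0 by (auto simp: gnr_elems_def gnr_zero_def e_def)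
  moreover have "?S \<noteq> {gnr_zero}" using ne by auto
  moreover have "gnr_boolean G ?S" using ee z0 by (auto simp: gnr_boolean_def)
  ultimately show ?thesis by blast
qed

end
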